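(* Let $W\subseteq K_n$ be a $k$-wheel with vertex set $V$ and center $v_0$. (i) If $v_0=\min V$, label the spokes so that $W=W(v_0;v_1,\dots,v_k)$ with $v_1=\max\{v_1,\dots,v_k\}$ and $v_2>v_k$. Then $LT(W)=(\mathrm{Rd}(W)\setminus\{v_0v_1\})\cup\{v_kv_1\}$. (ii) If $v_0=\max V$, label the spokes so that $W=W(v_0;v_1,\dots,v_k)$ with $v_1v_2$ the $\succ$-smallest chord of $W$ and $v_1>v_2$. Then $LT(W)=(\mathrm{Ch}(W)\setminus\{v_1v_2\})\cup\{v_0v_2\}$.
   Context: For $k\ge 3$ and distinct vertices $v_0,\dots,v_k\in[1,n]$, the $k$-wheel $W(v_0;v_1,\dots,v_k)$ has center $v_0$, radii $\mathrm{Rd}(W)=\{v_0v_i:1\le i\le k\}$ and chords $\mathrm{Ch}(W)=\{v_iv_{i+1}:1\le i\le k\}$ with $v_{k+1}=v_1$. A coupled tree of $W$ is a spanning tree $T\subseteq E(W)$ of $V(W)$ whose complement $E(W)\setminus T$ is also a spanning tree. Order the edges of $K_n$ totally by $12\succ13\succ\dots\succ1n\succ23\succ\dots\succ n{-}1\,n$ (for $a<b$, $c<d$: $ab\succ cd$ iff $a<c$, or $a=c$ and $b<d$). Extend to edge sets: $E\succ F$ iff $|E|>|F|$, or $|E|=|F|$ and the $\succ$-largest element of $E\triangle F$ lies in $E$. The leading tree $LT(W)$ is the $\succ$-largest coupled tree of $W$. *)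

theory Defs
  imports Main
begin

text \<open>Vertices are natural numbers; an edge is a two-element set of vertices.\<close>

definition edge_conn :: "nat set set \<Rightarrow> (nat \<times> nat) set" where
  "edge_conn T = {(x, y). {x, y} \<in> T}"

definition connects :: "nat set \<Rightarrow> nat set set \<Rightarrow> bool" where
  "connects V T \<longleftrightarrow> (\<forall>x\<in>V. \<forall>y\<in>V. (x, y) \<in> (edge_conn T)\<^sup>*)"

definition spanning_tree :: "nat set \<Rightarrow> nat set set \<Rightarrow> bool" where
  "spanning_tree V T \<longleftrightarrow>
     (\<forall>e\<in>T. e \<subseteq> V \<and> card e = 2) \<and> connects V T \<and>
     (\<forall>e\<in>T. \<not> connects V (T - {e}))"

definition coupled_tree :: "nat set \<Rightarrow> nat set set \<Rightarrow> nat set set \<Rightarrow> bool" where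
  "coupled_tree V E T \<longleftrightarrow> T \<subseteq> E \<and> spanning_tree V T \<and> spanning_tree V (E - T)"

definition edge_gt :: "nat set \<Rightarrow> nat set \<Rightarrow> bool" where
  "edge_gt e f \<longleftrightarrow> Min e < Min f \<or> (Min e = Min f \<and> Max e < Max f)"

definition set_gt :: "nat set set \<Rightarrow> nat set set \<Rightarrow> bool" where
  "set_gt E F \<longleftrightarrow> card E > card F \<or>
     (card E = card F \<and>
      (\<exists>x\<in>E - F. \<forall>y\<in>(E - F) \<union> (F - E). y \<noteq> x \<longrightarrow> edge_gt x y))"

definition wheel_vertices :: "(nat \<Rightarrow> nat) \<Rightarrow> nat \<Rightarrow> nat set" where
  "wheel_vertices v k = v ` {0..k}"

definition radii :: "(nat \<Rightarrow> nat) \<Rightarrow> nat \<Rightarrow> nat set set" where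
  "radii v k = {{v 0, v i} | i. 1 \<le> i \<and> i \<le> k}"

definition chords :: "(nat \<Rightarrow> nat) \<Rightarrow> nat \<Rightarrow> nat set set" where
  "chords v k = {{v i, v (if i = k then 1 else i + 1)} | i. 1 \<le> i \<and> i \<le> k}"

definition wheel_edges :: "(nat \<Rightarrow> nat) \<Rightarrow> nat \<Rightarrow> nat set set" where
  "wheel_edges v k = radii v k \<union> chords v k"

definition leading_tree :: "(nat \<Rightarrow> nat) \<Rightarrow> nat \<Rightarrow> nat set set" where
  "leading_tree v k = (THE T. coupled_tree (wheel_vertices v k) (wheel_edges v k) T \<and>
     (\<forall>T'. coupled_tree (wheel_vertices v k) (wheel_edges v k) T' \<and> T' \<noteq> T \<longrightarrow> set_gt T T'))"

end

theory Submission
  imports Defs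
begin


lemma edge_conn_sym: "(x,y) \<in> edge_conn F \<Longrightarrow> (y,x) \<in> edge_conn F"
  by (auto simp: edge_conn_def insert_commute)

lemma rtr_sym: "(x,y) \<in> (edge_conn F)\<^sup>* \<Longrightarrow> (y,x) \<in> (edge_conn F)\<^sup>*"
proof (induction rule: rtrancl_induct)
  case base then show ?case by simp
next
  case (step y z) then show ?case
    by (meson converse_rtrancl_into_rtrancl edge_conn_sym)
qed

lemma edge_rtr: "{x,y} \<in> F \<Longrightarrow> (x,y) \<in> (edge_conn F)\<^sup>*"
  by (auto simp: edge_conn_def)

lemma connects_root:
  assumes "r \<in> V" "\<forall>x\<in>V. (x, r) \<in> (edge_conn F)\<^sup>*"
  shows "connects V F"
  unfolding connects_def
proof (intro ballI)
  fix x y assume "x \<in> V" "y \<in> V"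
  then have "(x, r) \<in> (edge_conn F)\<^sup>*" "(r, y) \<in> (edge_conn F)\<^sup>*" using assms rtr_sym by blast+
  then show "(x, y) \<in> (edge_conn F)\<^sup>*" by (rule rtrancl_trans)
qed

lemma cut:
  assumes "\<forall>e\<in>F. e \<subseteq> A \<or> e \<inter> A = {}" "(x,y) \<in> (edge_conn F)\<^sup>*" "x \<in> A"
  shows "y \<in> A"
  using assms(2)
proof (induction rule: rtrancl_induct)
  case base show ?case using assms(3) .
next
  case (step y z)
  then have "{y,z} \<in> F" by (simp add: edge_conn_def)
  then have "{y,z} \<subseteq> A \<or> {y,z} \<inter> A = {}" using bspec[OF assms(1)] by blast
  then show ?case using step.IH by auto
qed

lemma not_connects:
  assumes "\<forall>e\<in>F. e \<subseteq> A \<or> e \<inter> A = {}" "x \<in> V" "y \<in> V" "x \<in> A" "y \<notin> A"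
  shows "\<not> connects V F"
proof
  assume "connects V F"
  then have "(x,y) \<in> (edge_conn F)\<^sup>*" using assms(2,3) unfolding connects_def by blast
  then show False using cut[OF assms(1) _ assms(4)] assms(5) by blast
qed

lemma reroute:
  assumes "connects V F" "(a,b) \<in> (edge_conn (F - {{a,b}}))\<^sup>*"
  shows "connects V (F - {{a,b}})"
proof -
  have "edge_conn F \<subseteq> (edge_conn (F - {{a,b}}))\<^sup>*"
  proof
    fix p assume "p \<in> edge_conn F"
    then obtain x y where p: "p = (x,y)" "{x,y} \<in> F" by (auto simp: edge_conn_def)
    show "p \<in> (edge_conn (F - {{a,b}}))\<^sup>*"
    proof (cases "{x,y} = {a,b}")
      case True
      then have "(x = a \<and> y = b) \<or> (x = b \<and> y = a)" by (auto simp: doubleton_eq_iff)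
      then show ?thesis using assms(2) rtr_sym p by blast
    next
      case False
      then have "(x,y) \<in> edge_conn (F - {{a,b}})" using p by (auto simp: edge_conn_def)
      then show ?thesis using p by auto
    qed
  qed
  then have "(edge_conn F)\<^sup>* \<subseteq> (edge_conn (F - {{a,b}}))\<^sup>*"
    by (rule rtrancl_subset_rtrancl)
  then show ?thesis using assms(1) unfolding connects_def by blast
qed

lemma connected_card:
  assumes "finite F" "finite V" "connects V F" "root \<in> V"
  shows "card V \<le> card F + 1"
proof -
  let ?R = "edge_conn F"
  define d where "d u = (LEAST m. (u, root) \<in> ?R ^^ m)" for u
  have dR: "(u, root) \<in> ?R ^^ d u" if "\<exists>m. (u, root) \<in> ?R ^^ m" for u
    unfolding d_def using that by (rule LeastI_ex)
  have ex: "\<exists>m. (u, root) \<in> ?R ^^ m" if "u \<in> V" for u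
    using assms(3,4) that unfolding connects_def by (meson rtrancl_imp_relpow)
  have dpos: "d u > 0" if "u \<in> V" "u \<noteq> root" for u
    using dR[OF ex[OF that(1)]] that(2) by (cases "d u") auto
  define w where "w u = (SOME x. (u,x) \<in> ?R \<and> (x, root) \<in> ?R ^^ (d u - 1))" for u
  have wP: "(u, w u) \<in> ?R \<and> (w u, root) \<in> ?R ^^ (d u - 1)" if "u \<in> V" "u \<noteq> root" for u
  proof -
    have "(u, root) \<in> ?R ^^ Suc (d u - 1)" using dR[OF ex[OF that(1)]] dpos[OF that] by simp
    from relpow_Suc_D2[OF this] obtain x where "(u,x) \<in> ?R" "(x, root) \<in> ?R ^^ (d u - 1)" by (elim exE conjE)
    then show ?thesis
      using someI_ex[of "\<lambda>x. (u,x) \<in> ?R \<and> (x, root) \<in> ?R ^^ (d u - 1)"] unfolding w_def by blast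
  qed
  have dw: "d (w u) = d u - 1" if "u \<in> V" "u \<noteq> root" for u
  proof -
    have "d (w u) \<le> d u - 1" unfolding d_def[of "w u"] using wP[OF that] by (simp add: Least_le)
    moreover have "(u, root) \<in> ?R ^^ Suc (d (w u))"
      using wP[OF that] dR[of "w u"] by (blast intro: relpow_Suc_I2)
    then have "d u \<le> Suc (d (w u))" unfolding d_def[of u] by (simp add: Least_le)
    ultimately show ?thesis by simp
  qed
  define f where "f u = {u, w u}" for u
  have inj: "inj_on f (V - {root})"
  proof (rule inj_onI)
    fix u u' assume u: "u \<in> V - {root}" "u' \<in> V - {root}" "f u = f u'"
    show "u = u'"
    proof (rule ccontr)
      assume "u \<noteq> u'"
      then have "u = w u'" "u' = w u" using u(3) unfolding f_def by (auto simp: doubleton_eq_iff)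
      then show False using dw[of u] dw[of u'] dpos[of u] dpos[of u'] u by auto
    qed
  qed
  have "f ` (V - {root}) \<subseteq> F" using wP unfolding f_def edge_conn_def by auto
  then have "card (V - {root}) \<le> card F" using card_inj_on_le[OF inj _ assms(1)] by blast
  then show ?thesis using assms(2,4) by simp
qed

lemma edge_gt_asym: "edge_gt x y \<Longrightarrow> \<not> edge_gt y x" by (auto simp: edge_gt_def)

lemma set_gt_asym: "set_gt A B \<Longrightarrow> \<not> set_gt B A"
proof
  assume a: "set_gt A B" "set_gt B A"
  then have c: "card A = card B" unfolding set_gt_def by auto
  then obtain x where x: "x \<in> A - B" "\<forall>y\<in>(A - B) \<union> (B - A). y \<noteq> x \<longrightarrow> edge_gt x y"
    using a(1) unfolding set_gt_def by auto
  obtain z where z: "z \<in> B - A" "\<forall>y\<in>(B - A) \<union> (A - B). y \<noteq> z \<longrightarrow> edge_gt z y"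
    using a(2) c unfolding set_gt_def by auto
  have "x \<noteq> z" using x z by auto
  then have "edge_gt x z" "edge_gt z x" using x z by auto
  then show False using edge_gt_asym by blast
qed

lemma two_set: "card e = 2 \<Longrightarrow> e = {Min e, Max e} \<and> Min e < Max e"
proof -
  assume "card e = 2"
  then obtain x y where "e = {x,y}" "x \<noteq> y" by (auto simp: card_2_iff)
  then show ?thesis by (cases "x < y") auto
qed

lemma edge_gt_total: "card x = 2 \<Longrightarrow> card y = 2 \<Longrightarrow> x \<noteq> y \<Longrightarrow> edge_gt x y \<or> edge_gt y x"
proof (rule ccontr)
  assume a: "card x = 2" "card y = 2" "x \<noteq> y" "\<not> (edge_gt x y \<or> edge_gt y x)"
  then have "Min x = Min y" "Max x = Max y" unfolding edge_gt_def by auto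
  then have "x = y" using two_set[OF a(1)] two_set[OF a(2)] by metis
  then show False using a by simp
qed

lemma edge_gt_trans: "edge_gt x y \<Longrightarrow> edge_gt y z \<Longrightarrow> edge_gt x z"
  unfolding edge_gt_def by auto

lemma exists_max:
  assumes "finite S" "S \<noteq> {}" "\<forall>e\<in>S. card e = 2"
  shows "\<exists>x\<in>S. \<forall>y\<in>S. y \<noteq> x \<longrightarrow> edge_gt x y"
  using assms
proof (induction S rule: finite_ne_induct)
  case (singleton x) then show ?case by auto
next
  case (insert a S)
  then obtain x where x: "x \<in> S" "\<forall>y\<in>S. y \<noteq> x \<longrightarrow> edge_gt x y" by auto
  have "a \<noteq> x" using insert x by auto
  then have "edge_gt a x \<or> edge_gt x a" using edge_gt_total insert x by auto
  then show ?case
  proof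
    assume "edge_gt a x"
    then show ?thesis using x edge_gt_trans by (intro bexI[of _ a]) auto
  next
    assume "edge_gt x a"
    then show ?thesis using x by (intro bexI[of _ x]) auto
  qed
qed

lemma set_gt_intro:
  assumes "finite T" "finite T'" "card T' \<le> card T" "T \<noteq> T'" "\<forall>e\<in>T \<union> T'. card e = 2"
   and "\<And>x. x \<in> T' - T \<Longrightarrow> (\<forall>y\<in>T. edge_gt y x \<longrightarrow> y \<in> T') \<Longrightarrow> False"
  shows "set_gt T T'"
proof (cases "card T' < card T")
  case True then show ?thesis by (simp add: set_gt_def)
next
  case False
  then have eq: "card T = card T'" using assms(3) by simp
  let ?S = "(T - T') \<union> (T' - T)"
  have "?S \<noteq> {}" using assms(4) by auto
  then obtain x where x: "x \<in> ?S" "\<forall>y\<in>?S. y \<noteq> x \<longrightarrow> edge_gt x y"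
    using exists_max[of ?S] assms(1,2,5) by auto
  show ?thesis
  proof (cases "x \<in> T - T'")
    case True then show ?thesis using eq x unfolding set_gt_def by blast
  next
    case False
    then have xT: "x \<in> T' - T" using x by auto
    have "\<forall>y\<in>T. edge_gt y x \<longrightarrow> y \<in> T'"
    proof (intro ballI impI)
      fix y assume "y \<in> T" "edge_gt y x"
      show "y \<in> T'"
      proof (rule ccontr)
        assume "y \<notin> T'"
        then have "y \<in> ?S" "y \<noteq> x" using \<open>y \<in> T\<close> xT by auto
        then have "edge_gt x y" using x(2) by blast
        then show False using \<open>edge_gt y x\<close> edge_gt_asym by blast
      qed
    qed
    then show ?thesis using assms(6)[OF xT] by blast
  qed
qed

lemma the_leading:
  assumes "coupled_tree V E T" "\<forall>T'. coupled_tree V E T' \<and> T' \<noteq> T \<longrightarrow> set_gt T T'"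
  shows "(THE T. coupled_tree V E T \<and> (\<forall>T'. coupled_tree V E T' \<and> T' \<noteq> T \<longrightarrow> set_gt T T')) = T"
proof (rule the_equality)
  show "coupled_tree V E T \<and> (\<forall>T'. coupled_tree V E T' \<and> T' \<noteq> T \<longrightarrow> set_gt T T')"
    using assms by blast
next
  fix T1 assume a: "coupled_tree V E T1 \<and> (\<forall>T'. coupled_tree V E T' \<and> T' \<noteq> T1 \<longrightarrow> set_gt T1 T')"
  show "T1 = T"
  proof (rule ccontr)
    assume "T1 \<noteq> T"
    then have "set_gt T1 T" "set_gt T T1" using a assms by auto
    then show False using set_gt_asym by blast
  qed
qed

lemma path:
  assumes "\<forall>j. a \<le> j \<and> j < b \<longrightarrow> {v j, v (Suc j)} \<in> F" "a \<le> b"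
  shows "(v a, v b) \<in> (edge_conn F)\<^sup>*"
  using assms
proof (induction b)
  case 0 then show ?case by simp
next
  case (Suc b)
  show ?case
  proof (cases "a = Suc b")
    case True then show ?thesis by simp
  next
    case False
    then have "(v a, v b) \<in> (edge_conn F)\<^sup>*" using Suc by auto
    moreover have "{v b, v (Suc b)} \<in> F" using Suc False by auto
    ultimately show ?thesis by (meson edge_rtr rtrancl_trans)
  qed
qed

lemma edge_gt_pair: "a < M \<Longrightarrow> b < M \<Longrightarrow> edge_gt {a,b} {M,b}"
  unfolding edge_gt_def by auto



locale wheel =
  fixes k :: nat and v :: "nat \<Rightarrow> nat"
  assumes k3: "k \<ge> 3" and inj: "inj_on v {0..k}"
begin

definition nx where "nx i = (if i = k then 1 else Suc i)"
definition r where "r i = {v 0, v i}"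
definition c where "c i = {v i, v (nx i)}"
abbreviation "V \<equiv> v ` {0..k}"
abbreviation "R \<equiv> r ` {1..k}"
abbreviation "C \<equiv> c ` {1..k}"
abbreviation "E \<equiv> R \<union> C"

definition cl :: "nat set \<Rightarrow> nat set \<Rightarrow> bool" where
  "cl I e \<longleftrightarrow> e \<subseteq> v ` I \<or> e \<inter> v ` I = {}"

lemma veq: "a \<le> k \<Longrightarrow> b \<le> k \<Longrightarrow> v a = v b \<longleftrightarrow> a = b"
  using inj by (auto simp: inj_on_def)

lemma nx_range: "1 \<le> i \<Longrightarrow> i \<le> k \<Longrightarrow> 1 \<le> nx i \<and> nx i \<le> k \<and> nx i \<noteq> i"
  using k3 by (auto simp: nx_def)

lemma nx_k: "nx k = 1" by (simp add: nx_def)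
lemma nx_lt: "i < k \<Longrightarrow> nx i = Suc i" by (simp add: nx_def)

lemma r_eq: "1 \<le> i \<Longrightarrow> i \<le> k \<Longrightarrow> 1 \<le> j \<Longrightarrow> j \<le> k \<Longrightarrow> r i = r j \<longleftrightarrow> i = j"
proof
  assume a: "1 \<le> i" "i \<le> k" "1 \<le> j" "j \<le> k" "r i = r j"
  then have "v i \<in> r j" unfolding r_def by auto
  then show "i = j" using a by (auto simp: r_def veq)
qed simp

lemma c_eq: "1 \<le> i \<Longrightarrow> i \<le> k \<Longrightarrow> 1 \<le> j \<Longrightarrow> j \<le> k \<Longrightarrow> c i = c j \<longleftrightarrow> i = j"
proof
  assume a: "1 \<le> i" "i \<le> k" "1 \<le> j" "j \<le> k" "c i = c j"
  then have "v i \<in> c j" "v (nx i) \<in> c j" unfolding c_def by auto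
  then have "(i = j \<or> i = nx j) \<and> (nx i = j \<or> nx i = nx j)"
    using a nx_range[of i] nx_range[of j] by (auto simp: c_def veq)
  then show "i = j" using a k3 by (auto simp: nx_def split: if_splits)
qed simp

lemma r_ne_c: "1 \<le> j \<Longrightarrow> j \<le> k \<Longrightarrow> r i \<noteq> c j"
proof
  assume a: "1 \<le> j" "j \<le> k" "r i = c j"
  then have "v 0 \<in> c j" unfolding r_def by auto
  then show False using a nx_range[of j] by (auto simp: c_def veq)
qed

lemma card_r: "1 \<le> i \<Longrightarrow> i \<le> k \<Longrightarrow> card (r i) = 2"
  by (auto simp: r_def veq)

lemma card_c: "1 \<le> i \<Longrightarrow> i \<le> k \<Longrightarrow> card (c i) = 2"
  using nx_range[of i] by (auto simp: c_def veq)

lemma E_props: "e \<in> E \<Longrightarrow> e \<subseteq> V \<and> card e = 2"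
  using card_r card_c nx_range by (auto simp: r_def c_def)

lemma cl_pair: "I \<subseteq> {0..k} \<Longrightarrow> a \<le> k \<Longrightarrow> b \<le> k \<Longrightarrow> (a \<in> I \<longleftrightarrow> b \<in> I) \<Longrightarrow> cl I {v a, v b}"
  unfolding cl_def using inj_on_image_mem_iff[OF inj, of a I] inj_on_image_mem_iff[OF inj, of b I]
  by auto

lemma cl_r: "I \<subseteq> {0..k} \<Longrightarrow> j \<le> k \<Longrightarrow> (0 \<in> I \<longleftrightarrow> j \<in> I) \<Longrightarrow> cl I (r j)"
  unfolding r_def by (rule cl_pair) auto

lemma cl_c: "I \<subseteq> {0..k} \<Longrightarrow> 1 \<le> j \<Longrightarrow> j \<le> k \<Longrightarrow> (j \<in> I \<longleftrightarrow> nx j \<in> I) \<Longrightarrow> cl I (c j)"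
  unfolding c_def using nx_range[of j] by (intro cl_pair) auto

lemma not_conn: "I \<subseteq> {0..k} \<Longrightarrow> a \<in> I \<Longrightarrow> b \<le> k \<Longrightarrow> b \<notin> I \<Longrightarrow> \<forall>e\<in>F. cl I e \<Longrightarrow> \<not> connects V F"
  apply (rule not_connects[of F "v ` I" "v a" _ "v b"])
  using inj_on_image_mem_iff[OF inj, of b I] unfolding cl_def by auto

lemma card_V: "card V = Suc k"
  using card_image[OF inj] by simp

lemma card_E: "card E \<le> 2 * k"
proof -
  have "card E \<le> card R + card C" by (rule card_Un_le)
  also have "\<dots> \<le> k + k" using card_image_le[of "{1..k}" r] card_image_le[of "{1..k}" c] by simp
  finally show ?thesis by simp
qed

lemma coupled_card: "coupled_tree V E T \<Longrightarrow> card T \<le> k"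
proof -
  assume a: "coupled_tree V E T"
  then have "connects V (E - T)" "T \<subseteq> E" unfolding coupled_tree_def spanning_tree_def by auto
  then have "card V \<le> card (E - T) + 1" using connected_card[of "E - T" V "v 0"] by auto
  then have "k \<le> card E - card T" using card_V card_Diff_subset[OF _ \<open>T \<subseteq> E\<close>] finite_subset[OF \<open>T \<subseteq> E\<close>]
    by simp
  then show ?thesis using card_E k3 by linarith
qed

lemma path_c: "1 \<le> a \<Longrightarrow> a \<le> b \<Longrightarrow> b \<le> k \<Longrightarrow> (\<forall>j. a \<le> j \<and> j < b \<longrightarrow> c j \<in> F) \<Longrightarrow> (v a, v b) \<in> (edge_conn F)\<^sup>*"
  by (rule path) (auto simp: c_def nx_lt)

lemma edge_r: "r i \<in> F \<Longrightarrow> (v i, v 0) \<in> (edge_conn F)\<^sup>*"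
  unfolding r_def by (rule edge_rtr) (simp add: insert_commute)

lemma edge_r': "r i \<in> F \<Longrightarrow> (v 0, v i) \<in> (edge_conn F)\<^sup>*"
  unfolding r_def by (rule edge_rtr)

lemma edge_c: "c i \<in> F \<Longrightarrow> (v i, v (nx i)) \<in> (edge_conn F)\<^sup>*"
  unfolding c_def by (rule edge_rtr)

lemma edge_c': "c i \<in> F \<Longrightarrow> (v (nx i), v i) \<in> (edge_conn F)\<^sup>*"
  unfolding c_def by (rule edge_rtr) (simp add: insert_commute)

end


locale wheel1 = wheel +
  assumes h0: "v 0 = Min (v ` {0..k})" and h1: "v 1 = Max (v ` {1..k})" and h2: "v 2 > v k"
begin

lemma lt0: "1 \<le> i \<Longrightarrow> i \<le> k \<Longrightarrow> v 0 < v i"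
proof -
  assume a: "1 \<le> i" "i \<le> k"
  have "v 0 \<le> v i" using h0 a by simp
  moreover have "v 0 \<noteq> v i" using a veq[of 0 i] by simp
  ultimately show ?thesis by simp
qed

lemma lt1: "2 \<le> i \<Longrightarrow> i \<le> k \<Longrightarrow> v i < v 1"
proof -
  assume a: "2 \<le> i" "i \<le> k"
  have "v i \<le> v 1" using h1 a by simp
  moreover have "v 1 \<noteq> v i" using a veq[of 1 i] by simp
  ultimately show ?thesis by simp
qed

definition "T1 = r ` {2..k} \<union> {c k}"
definition "ET1 = insert (r 1) (c ` {1..k-1})"

lemma T1_sub: "T1 \<subseteq> E" unfolding T1_def using k3 by auto

lemma ET1_eq: "E - T1 = ET1"
proof
  show "E - T1 \<subseteq> ET1"
  proof
    fix e assume e: "e \<in> E - T1"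
    show "e \<in> ET1"
    proof (cases "e \<in> R")
      case True
      then obtain i where "1 \<le> i" "i \<le> k" "e = r i" by auto
      then show ?thesis using e unfolding T1_def ET1_def by (cases "i = 1") auto
    next
      case False
      then obtain i where "1 \<le> i" "i \<le> k" "e = c i" using e by auto
      then show ?thesis using e unfolding T1_def ET1_def by (cases "i = k") auto
    qed
  qed
next
  show "ET1 \<subseteq> E - T1"
  proof
    fix e assume e: "e \<in> ET1"
    then have "e \<in> E" unfolding ET1_def using k3 by auto
    moreover have "e \<notin> T1"
    proof
      assume "e \<in> T1"
      then consider (a) i where "2 \<le> i" "i \<le> k" "e = r i" | (b) "e = c k" unfolding T1_def by auto
      then show False
      proof cases
        case a
        then show False using e r_eq[of i 1] r_ne_c unfolding ET1_def by auto
      next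
        case b
        from e consider "e = r 1" | x where "1 \<le> x" "x \<le> k - 1" "e = c x" unfolding ET1_def by auto
        then show False
        proof cases
          case 1 then show False using b r_ne_c[of k 1] k3 by auto
        next
          case 2 then show False using b c_eq[of k x] k3 by auto
        qed
      qed
    qed
    ultimately show "e \<in> E - T1" by simp
  qed
qed

lemma card_T1: "card T1 = k"
proof -
  have "inj_on r {2..k}" by (rule inj_onI) (auto simp: r_eq)
  then have "card (r ` {2..k}) = k - 1" by (simp add: card_image)
  moreover have "c k \<notin> r ` {2..k}" using r_ne_c[of k] k3 by auto
  ultimately show ?thesis unfolding T1_def using k3 by simp
qed

lemma T1_tree: "spanning_tree V T1"
  unfolding spanning_tree_def
proof (intro conjI)
  show "\<forall>e\<in>T1. e \<subseteq> V \<and> card e = 2" using T1_sub E_props by blast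
  show "connects V T1"
  proof (rule connects_root[of "v 0"])
    show "\<forall>x\<in>V. (x, v 0) \<in> (edge_conn T1)\<^sup>*"
    proof
      fix x assume "x \<in> V"
      then obtain i where i: "i \<le> k" "x = v i" by auto
      consider "i = 0" | "i = 1" | "2 \<le> i" by linarith
      then show "(x, v 0) \<in> (edge_conn T1)\<^sup>*"
      proof cases
        case 1 then show ?thesis using i by simp
      next
        case 2
        have "(v 1, v k) \<in> (edge_conn T1)\<^sup>*" using edge_c'[of k T1] unfolding T1_def by (simp add: nx_k)
        moreover have "(v k, v 0) \<in> (edge_conn T1)\<^sup>*" by (rule edge_r) (use k3 in \<open>auto simp: T1_def\<close>)
        ultimately show ?thesis using 2 i by (meson rtrancl_trans)
      next
        case 3
        then have "r i \<in> T1" using i unfolding T1_def by auto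
        then show ?thesis using i edge_r by blast
      qed
    qed
  qed simp
  show "\<forall>e\<in>T1. \<not> connects V (T1 - {e})"
  proof
    fix e assume "e \<in> T1"
    then have "e = c k \<or> (\<exists>i. 2 \<le> i \<and> i \<le> k \<and> e = r i)" unfolding T1_def by auto
    then consider (a) i where "2 \<le> i" "i < k" "e = r i" | (b) "e = r k" | (c) "e = c k"
      by (metis nat_less_le)
    then show "\<not> connects V (T1 - {e})"
    proof cases
      case a
      show ?thesis
      proof (rule not_conn[of "{i}" i 0])
        show "\<forall>e'\<in>T1 - {e}. cl {i} e'"
          using a k3 by (auto simp: T1_def r_eq nx_k intro!: cl_r cl_c)
      qed (use a in auto)
    next
      case b
      show ?thesis
      proof (rule not_conn[of "{k,1}" k 0])
        show "\<forall>e'\<in>T1 - {e}. cl {k,1} e'"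
          using b k3 by (auto simp: T1_def r_eq nx_k intro!: cl_r cl_c)
      qed (use k3 in auto)
    next
      case c
      show ?thesis
      proof (rule not_conn[of "{1}" 1 0])
        show "\<forall>e'\<in>T1 - {e}. cl {1} e'"
          using c k3 by (auto simp: T1_def intro!: cl_r)
      qed (use k3 in auto)
    qed
  qed
qed

lemma ET1_tree: "spanning_tree V ET1"
  unfolding spanning_tree_def
proof (intro conjI)
  show "\<forall>e\<in>ET1. e \<subseteq> V \<and> card e = 2"
  proof
    fix e assume "e \<in> ET1"
    then have "e \<in> E" using ET1_eq by blast
    then show "e \<subseteq> V \<and> card e = 2" by (rule E_props)
  qed
  show "connects V ET1"
  proof (rule connects_root[of "v 0"])
    show "\<forall>x\<in>V. (x, v 0) \<in> (edge_conn ET1)\<^sup>*"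
    proof
      fix x assume "x \<in> V"
      then obtain i where i: "i \<le> k" "x = v i" by auto
      show "(x, v 0) \<in> (edge_conn ET1)\<^sup>*"
      proof (cases "i = 0")
        case True then show ?thesis using i by simp
      next
        case False
        have "(v 1, v i) \<in> (edge_conn ET1)\<^sup>*"
          by (rule path_c) (use False i in \<open>auto simp: ET1_def\<close>)
        then have "(v i, v 1) \<in> (edge_conn ET1)\<^sup>*" by (rule rtr_sym)
        moreover have "(v 1, v 0) \<in> (edge_conn ET1)\<^sup>*" by (rule edge_r) (simp add: ET1_def)
        ultimately show ?thesis using i by (meson rtrancl_trans)
      qed
    qed
  qed simp
  show "\<forall>e\<in>ET1. \<not> connects V (ET1 - {e})"
  proof
    fix e assume "e \<in> ET1"
    then consider (a) "e = r 1" | (b) i where "1 \<le> i" "i \<le> k - 1" "e = c i"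
      unfolding ET1_def by auto
    then show "\<not> connects V (ET1 - {e})"
    proof cases
      case a
      show ?thesis
      proof (rule not_conn[of "{0}" 0 1])
        show "\<forall>e'\<in>ET1 - {e}. cl {0} e'"
        proof
          fix e' assume "e' \<in> ET1 - {e}"
          then have "e' \<in> c ` {1..k-1}" using a unfolding ET1_def by blast
          then obtain j where j: "1 \<le> j" "j \<le> k - 1" "e' = c j" by auto
          have "cl {0} (c j)" using j k3 by (intro cl_c) (auto simp: nx_def)
          then show "cl {0} e'" using j by simp
        qed
      qed (use k3 in auto)
    next
      case b
      have "\<forall>e'\<in>ET1 - {e}. cl {0..i} e'"
      proof
        fix e' assume e': "e' \<in> ET1 - {e}"
        then have "e' = r 1 \<or> e' \<in> c ` {1..k-1}" unfolding ET1_def by blast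
        then show "cl {0..i} e'"
        proof
          assume "e' = r 1"
          moreover have "cl {0..i} (r 1)" using b by (intro cl_r) auto
          ultimately show ?thesis by simp
        next
          assume "e' \<in> c ` {1..k-1}"
          then obtain j where j: "1 \<le> j" "j \<le> k - 1" "e' = c j" by auto
          have "j \<noteq> i" using e' j b by auto
          then have "cl {0..i} (c j)" using j b k3 by (intro cl_c) (auto simp: nx_lt)
          then show ?thesis using j by simp
        qed
      qed
      then show ?thesis using b k3 by (intro not_conn[of "{0..i}" i "Suc i"]) auto
    qed
  qed
qed

lemma c1_eq: "c 1 = {v 1, v 2}" using k3 by (simp add: c_def nx_lt numeral_2_eq_2)
lemma ck_eq: "c k = {v k, v 1}" by (simp add: c_def nx_k)

lemma T1_max:
  assumes ct: "coupled_tree V E T'" and ne: "T' \<noteq> T1"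
  shows "set_gt T1 T'"
proof (rule set_gt_intro)
  have sub: "T' \<subseteq> E" using ct unfolding coupled_tree_def by auto
  show "finite T1" using T1_sub finite_subset by blast
  show "finite T'" using sub finite_subset by blast
  show "card T' \<le> card T1" using coupled_card[OF ct] card_T1 by simp
  show "T1 \<noteq> T'" using ne by simp
  show "\<forall>e\<in>T1 \<union> T'. card e = 2" using T1_sub sub E_props by blast
  have conT: "connects V T'" and minT: "\<forall>e\<in>T'. \<not> connects V (T' - {e})"
    and conC: "connects V (E - T')"
    using ct unfolding coupled_tree_def spanning_tree_def by auto
  fix x assume x: "x \<in> T' - T1" and H: "\<forall>y\<in>T1. edge_gt y x \<longrightarrow> y \<in> T'"
  have "x \<in> ET1" using x sub ET1_eq by auto
  then consider (a) "x = r 1" | (b) j where "1 \<le> j" "j \<le> k - 1" "x = c j"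
    unfolding ET1_def by auto
  then show False
  proof cases
    case a
    have rT: "r i \<in> T'" if "2 \<le> i" "i \<le> k" for i
    proof -
      have "edge_gt (r i) (r 1)"
        using lt0[of i] lt0[of 1] lt1[of i] that k3 unfolding r_def edge_gt_def by auto
      moreover have "r i \<in> T1" using that unfolding T1_def by auto
      ultimately show ?thesis using H a by blast
    qed
    have "\<forall>e\<in>E - T'. cl {0} e"
    proof
      fix e assume e: "e \<in> E - T'"
      show "cl {0} e"
      proof (cases "e \<in> R")
        case True
        then obtain i where "1 \<le> i" "i \<le> k" "e = r i" by auto
        then show ?thesis using rT[of i] e x a by (cases "i = 1") auto
      next
        case False
        then obtain j where j: "1 \<le> j" "j \<le> k" "e = c j" using e by auto
        have "cl {0} (c j)" using nx_range[of j] j by (intro cl_c) auto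
        then show ?thesis using j by simp
      qed
    qed
    then have "\<not> connects V (E - T')" using k3 by (intro not_conn[of "{0}" 0 1]) auto
    then show False using conC by simp
  next
    case b
    have rT: "r i \<in> T'" if "2 \<le> i" "i \<le> k" for i
    proof -
      have "edge_gt (r i) (c j)"
        using lt0[of j] lt0[of "nx j"] lt0[of i] nx_range[of j] b that unfolding r_def c_def edge_gt_def
        by (auto simp: min_def)
      moreover have "r i \<in> T1" using that unfolding T1_def by auto
      ultimately show ?thesis using H b by blast
    qed
    show False
    proof (cases "j = 1")
      case False
      let ?F = "T' - {{v j, v (Suc j)}}"
      have cj: "c j = {v j, v (Suc j)}" using b k3 by (simp add: c_def nx_lt)
      have m: "r j \<in> ?F" "r (Suc j) \<in> ?F" using rT[of j] rT[of "Suc j"] b False r_ne_c[of j] r_ne_c[of j "Suc j"] cj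
        by auto
      have "(v j, v 0) \<in> (edge_conn ?F)\<^sup>*" using edge_r[OF m(1)] .
      moreover have "(v 0, v (Suc j)) \<in> (edge_conn ?F)\<^sup>*" using edge_r'[OF m(2)] .
      ultimately have "(v j, v (Suc j)) \<in> (edge_conn ?F)\<^sup>*" by (rule rtrancl_trans)
      then have "connects V ?F" by (rule reroute[OF conT])
      moreover have "c j \<in> T'" using x b by simp
      ultimately show False using minT cj by auto
    next
      case True
      let ?F = "T' - {{v 1, v 2}}"
      have "edge_gt (c k) (c 1)" unfolding ck_eq c1_eq edge_gt_def
        using lt1[of k] lt1[of 2] h2 k3 by auto
      moreover have "c k \<in> T1" unfolding T1_def by simp
      ultimately have ckT: "c k \<in> T'" using H b True by blast
      have "c k \<noteq> {v 1, v 2}" using c_eq[of k 1] c1_eq k3 by auto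
      then have m: "c k \<in> ?F" "r k \<in> ?F" "r 2 \<in> ?F"
        using ckT rT[of k] rT[of 2] k3 r_ne_c[of 1 k] r_ne_c[of 1 2] c1_eq by auto
      have "(v 1, v k) \<in> (edge_conn ?F)\<^sup>*" using edge_c'[OF m(1)] by (simp add: nx_k)
      moreover have "(v k, v 0) \<in> (edge_conn ?F)\<^sup>*" using edge_r[OF m(2)] .
      moreover have "(v 0, v 2) \<in> (edge_conn ?F)\<^sup>*" using edge_r'[OF m(3)] .
      ultimately have "(v 1, v 2) \<in> (edge_conn ?F)\<^sup>*" by (meson rtrancl_trans)
      then have "connects V ?F" by (rule reroute[OF conT])
      moreover have "c 1 \<in> T'" using x b True by simp
      ultimately show False using minT c1_eq by auto
    qed
  qed
qed

lemma part1: "(THE T. coupled_tree V E T \<and> (\<forall>T'. coupled_tree V E T' \<and> T' \<noteq> T \<longrightarrow> set_gt T T')) = T1"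
proof (rule the_leading)
  show "coupled_tree V E T1" unfolding coupled_tree_def using T1_sub T1_tree ET1_tree ET1_eq by simp
  show "\<forall>T'. coupled_tree V E T' \<and> T' \<noteq> T1 \<longrightarrow> set_gt T1 T'" using T1_max by blast
qed

end


locale wheel2 = wheel +
  assumes g0: "v 0 = Max (v ` {0..k})" and g1: "\<forall>e\<in>c ` {1..k}. e \<noteq> {v 1, v 2} \<longrightarrow> edge_gt e {v 1, v 2}"
    and g2: "v 1 > v 2"
begin

lemma gt0: "1 \<le> i \<Longrightarrow> i \<le> k \<Longrightarrow> v i < v 0"
proof -
  assume a: "1 \<le> i" "i \<le> k"
  have "v i \<le> v 0" using g0 a by simp
  moreover have "v 0 \<noteq> v i" using a veq[of 0 i] by simp
  ultimately show ?thesis by simp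
qed

lemma c1_eq: "c 1 = {v 1, v 2}" using k3 by (simp add: c_def nx_lt numeral_2_eq_2)

definition "T2 = c ` {2..k} \<union> {r 2}"
definition "ET2 = insert (c 1) (insert (r 1) (r ` {3..k}))"

lemma T2_sub: "T2 \<subseteq> E" unfolding T2_def using k3 by auto

lemma ET2_eq: "E - T2 = ET2"
proof
  show "E - T2 \<subseteq> ET2"
  proof
    fix e assume e: "e \<in> E - T2"
    show "e \<in> ET2"
    proof (cases "e \<in> R")
      case True
      then obtain i where "1 \<le> i" "i \<le> k" "e = r i" by auto
      then show ?thesis using e unfolding T2_def ET2_def by (cases "i = 1"; cases "i = 2") auto
    next
      case False
      then obtain i where "1 \<le> i" "i \<le> k" "e = c i" using e by auto
      then show ?thesis using e unfolding T2_def ET2_def by (cases "i = 1") auto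
    qed
  qed
next
  show "ET2 \<subseteq> E - T2"
  proof
    fix e assume e: "e \<in> ET2"
    then have "e \<in> E" unfolding ET2_def using k3 by auto
    moreover have "e \<notin> T2"
    proof
      assume "e \<in> T2"
      then consider (a) i where "2 \<le> i" "i \<le> k" "e = c i" | (b) "e = r 2" unfolding T2_def by auto
      then show False
      proof cases
        case a
        from e consider "e = c 1" | "e = r 1" | j where "3 \<le> j" "j \<le> k" "e = r j" unfolding ET2_def by auto
        then show False
        proof cases
          case 1 then show False using a c_eq[of i 1] by auto
        next
          case 2 then show False using a r_ne_c[of i 1] by auto
        next
          case 3 then show False using a r_ne_c[of i j] by auto
        qed
      next
        case b
        from e consider "e = c 1" | "e = r 1" | j where "3 \<le> j" "j \<le> k" "e = r j" unfolding ET2_def by auto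
        then show False
        proof cases
          case 1 then show False using b r_ne_c[of 1 2] k3 by auto
        next
          case 2 then show False using b r_eq[of 2 1] k3 by auto
        next
          case 3 then show False using b r_eq[of 2 j] k3 by auto
        qed
      qed
    qed
    ultimately show "e \<in> E - T2" by simp
  qed
qed

lemma card_T2: "card T2 = k"
proof -
  have "inj_on c {2..k}" by (rule inj_onI) (auto simp: c_eq)
  then have "card (c ` {2..k}) = k - 1" by (simp add: card_image)
  moreover have "r 2 \<notin> c ` {2..k}" using r_ne_c k3 by auto
  ultimately show ?thesis unfolding T2_def using k3 by simp
qed

lemma T2_tree: "spanning_tree V T2"
  unfolding spanning_tree_def
proof (intro conjI)
  show "\<forall>e\<in>T2. e \<subseteq> V \<and> card e = 2"
  proof
    fix e assume "e \<in> T2"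
    then have "e \<in> E" using T2_sub by blast
    then show "e \<subseteq> V \<and> card e = 2" by (rule E_props)
  qed
  have p2: "(v 2, v i) \<in> (edge_conn T2)\<^sup>*" if "2 \<le> i" "i \<le> k" for i
    by (rule path_c) (use that in \<open>auto simp: T2_def\<close>)
  show "connects V T2"
  proof (rule connects_root[of "v 2"])
    show "v 2 \<in> V" using k3 by auto
    show "\<forall>x\<in>V. (x, v 2) \<in> (edge_conn T2)\<^sup>*"
    proof
      fix x assume "x \<in> V"
      then obtain i where i: "i \<le> k" "x = v i" by auto
      consider "i = 0" | "i = 1" | "2 \<le> i" by linarith
      then show "(x, v 2) \<in> (edge_conn T2)\<^sup>*"
      proof cases
        case 1
        have "r 2 \<in> T2" unfolding T2_def by simp
        then show ?thesis using i 1 edge_r' by blast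
      next
        case 2
        have "c k \<in> T2" unfolding T2_def using k3 by simp
        then have "(v k, v 1) \<in> (edge_conn T2)\<^sup>*" using edge_c[of k T2] by (simp add: nx_k)
        moreover have "(v 2, v k) \<in> (edge_conn T2)\<^sup>*" using p2[of k] k3 by simp
        ultimately have "(v 2, v 1) \<in> (edge_conn T2)\<^sup>*" by (meson rtrancl_trans)
        then show ?thesis using 2 i rtr_sym by blast
      next
        case 3 then show ?thesis using i p2 rtr_sym by blast
      qed
    qed
  qed
  show "\<forall>e\<in>T2. \<not> connects V (T2 - {e})"
  proof
    fix e assume "e \<in> T2"
    then have "e = r 2 \<or> (\<exists>i. 2 \<le> i \<and> i \<le> k \<and> e = c i)" unfolding T2_def by auto
    then consider (a) "e = r 2" | (b) i where "2 \<le> i" "i < k" "e = c i" | (c) "e = c k"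
      by (metis nat_less_le)
    then show "\<not> connects V (T2 - {e})"
    proof cases
      case a
      have "\<forall>e'\<in>T2 - {e}. cl {0} e'"
      proof
        fix e' assume e': "e' \<in> T2 - {e}"
        then have "e' \<in> c ` {2..k}" using a unfolding T2_def by blast
        then obtain j where j: "2 \<le> j" "j \<le> k" "e' = c j" by auto
        have "cl {0} (c j)" using j by (intro cl_c) (auto simp: nx_def)
        then show "cl {0} e'" using j by simp
      qed
      then show ?thesis using k3 by (intro not_conn[of "{0}" 0 2]) auto
    next
      case b
      have "\<forall>e'\<in>T2 - {e}. cl ({0} \<union> {2..i}) e'"
      proof
        fix e' assume e': "e' \<in> T2 - {e}"
        then have "e' = r 2 \<or> e' \<in> c ` {2..k}" unfolding T2_def by blast
        then show "cl ({0} \<union> {2..i}) e'"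
        proof
          assume "e' = r 2"
          moreover have "cl ({0} \<union> {2..i}) (r 2)" using b by (intro cl_r) auto
          ultimately show ?thesis by simp
        next
          assume "e' \<in> c ` {2..k}"
          then obtain j where j: "2 \<le> j" "j \<le> k" "e' = c j" by auto
          have "j \<noteq> i" using e' j b by auto
          then have "cl ({0} \<union> {2..i}) (c j)" using j b k3 by (intro cl_c) (auto simp: nx_def)
          then show ?thesis using j by simp
        qed
      qed
      then show ?thesis using b k3 by (intro not_conn[of "{0} \<union> {2..i}" i "Suc i"]) auto
    next
      case c
      have "\<forall>e'\<in>T2 - {e}. cl {1} e'"
      proof
        fix e' assume e': "e' \<in> T2 - {e}"
        then have "e' = r 2 \<or> e' \<in> c ` {2..k}" unfolding T2_def by blast
        then show "cl {1} e'"
        proof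
          assume "e' = r 2"
          moreover have "cl {1} (r 2)" by (intro cl_r) (use k3 in auto)
          ultimately show ?thesis by simp
        next
          assume "e' \<in> c ` {2..k}"
          then obtain j where j: "2 \<le> j" "j \<le> k" "e' = c j" by auto
          have "j \<noteq> k" using e' j c by auto
          then have "cl {1} (c j)" using j k3 by (intro cl_c) (auto simp: nx_def)
          then show ?thesis using j by simp
        qed
      qed
      then show ?thesis using k3 by (intro not_conn[of "{1}" 1 0]) auto
    qed
  qed
qed

lemma ET2_tree: "spanning_tree V ET2"
  unfolding spanning_tree_def
proof (intro conjI)
  show "\<forall>e\<in>ET2. e \<subseteq> V \<and> card e = 2"
  proof
    fix e assume "e \<in> ET2"
    then have "e \<in> E" using ET2_eq by blast
    then show "e \<subseteq> V \<and> card e = 2" by (rule E_props)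
  qed
  show "connects V ET2"
  proof (rule connects_root[of "v 0"])
    show "\<forall>x\<in>V. (x, v 0) \<in> (edge_conn ET2)\<^sup>*"
    proof
      fix x assume "x \<in> V"
      then obtain i where i: "i \<le> k" "x = v i" by auto
      consider "i = 0" | "i = 2" | "i = 1 \<or> 3 \<le> i" by linarith
      then show "(x, v 0) \<in> (edge_conn ET2)\<^sup>*"
      proof cases
        case 1 then show ?thesis using i by simp
      next
        case 2
        have "c 1 \<in> ET2" "r 1 \<in> ET2" unfolding ET2_def by simp_all
        then have "(v 2, v 1) \<in> (edge_conn ET2)\<^sup>*" "(v 1, v 0) \<in> (edge_conn ET2)\<^sup>*"
          using edge_c'[of 1 ET2] edge_r[of 1 ET2] k3 by (simp_all add: nx_lt numeral_2_eq_2)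
        then show ?thesis using 2 i by (meson rtrancl_trans)
      next
        case 3
        then have "r i \<in> ET2" using i unfolding ET2_def by auto
        then show ?thesis using i edge_r by blast
      qed
    qed
  qed simp
  show "\<forall>e\<in>ET2. \<not> connects V (ET2 - {e})"
  proof
    fix e assume "e \<in> ET2"
    then consider (a) "e = c 1" | (b) "e = r 1" | (c) i where "3 \<le> i" "i \<le> k" "e = r i"
      unfolding ET2_def by auto
    then show "\<not> connects V (ET2 - {e})"
    proof cases
      case a
      have "\<forall>e'\<in>ET2 - {e}. cl {2} e'"
      proof
        fix e' assume e': "e' \<in> ET2 - {e}"
        then have "e' = r 1 \<or> e' \<in> r ` {3..k}" using a unfolding ET2_def by blast
        then show "cl {2} e'"
        proof
          assume "e' = r 1"
          moreover have "cl {2} (r 1)" using k3 by (intro cl_r) auto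
          ultimately show ?thesis by simp
        next
          assume "e' \<in> r ` {3..k}"
          then obtain j where j: "3 \<le> j" "j \<le> k" "e' = r j" by auto
          have "cl {2} (r j)" using j by (intro cl_r) auto
          then show ?thesis using j by simp
        qed
      qed
      then show ?thesis using k3 by (intro not_conn[of "{2}" 2 0]) auto
    next
      case b
      have "\<forall>e'\<in>ET2 - {e}. cl {1,2} e'"
      proof
        fix e' assume e': "e' \<in> ET2 - {e}"
        then have "e' = c 1 \<or> e' \<in> r ` {3..k}" using b unfolding ET2_def by blast
        then show "cl {1,2} e'"
        proof
          assume "e' = c 1"
          moreover have "cl {1,2} (c 1)" using k3 by (intro cl_c) (auto simp: nx_def)
          ultimately show ?thesis by simp
        next
          assume "e' \<in> r ` {3..k}"
          then obtain j where j: "3 \<le> j" "j \<le> k" "e' = r j" by auto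
          have "cl {1,2} (r j)" using j by (intro cl_r) auto
          then show ?thesis using j by simp
        qed
      qed
      then show ?thesis using k3 by (intro not_conn[of "{1,2}" 1 0]) auto
    next
      case c
      have "\<forall>e'\<in>ET2 - {e}. cl {i} e'"
      proof
        fix e' assume e': "e' \<in> ET2 - {e}"
        then have "e' = c 1 \<or> e' = r 1 \<or> e' \<in> r ` {3..k}" unfolding ET2_def by blast
        then show "cl {i} e'"
        proof (elim disjE)
          assume "e' = c 1"
          moreover have "cl {i} (c 1)" using k3 c by (intro cl_c) (auto simp: nx_def)
          ultimately show ?thesis by simp
        next
          assume "e' = r 1"
          moreover have "cl {i} (r 1)" using k3 c by (intro cl_r) auto
          ultimately show ?thesis by simp
        next
          assume "e' \<in> r ` {3..k}"
          then obtain j where j: "3 \<le> j" "j \<le> k" "e' = r j" by auto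
          have "j \<noteq> i" using e' j c by auto
          then have "cl {i} (r j)" using j c by (intro cl_r) auto
          then show ?thesis using j by simp
        qed
      qed
      then show ?thesis using c by (intro not_conn[of "{i}" i 0]) auto
    qed
  qed
qed

lemma ck_eq: "c k = {v k, v 1}" by (simp add: c_def nx_k)

lemma T2_max:
  assumes ct: "coupled_tree V E T'" and ne: "T' \<noteq> T2"
  shows "set_gt T2 T'"
proof (rule set_gt_intro)
  have sub: "T' \<subseteq> E" using ct unfolding coupled_tree_def by auto
  show "finite T2" using T2_sub finite_subset by blast
  show "finite T'" using sub finite_subset by blast
  show "card T' \<le> card T2" using coupled_card[OF ct] card_T2 by simp
  show "T2 \<noteq> T'" using ne by simp
  show "\<forall>e\<in>T2 \<union> T'. card e = 2" using T2_sub sub E_props by blast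
  have conT: "connects V T'" and minT: "\<forall>e\<in>T'. \<not> connects V (T' - {e})"
    and conC: "connects V (E - T')"
    using ct unfolding coupled_tree_def spanning_tree_def by auto
  fix x assume x: "x \<in> T' - T2" and H: "\<forall>y\<in>T2. edge_gt y x \<longrightarrow> y \<in> T'"
  have "x \<in> ET2" using x sub ET2_eq by auto
  then consider (a) "x = c 1" | (b) "x = r 1" | (c) i where "3 \<le> i" "i \<le> k" "x = r i"
    unfolding ET2_def by auto
  then show False
  proof cases
    case a
    have cT: "c j \<in> T'" if "2 \<le> j" "j \<le> k" for j
    proof -
      have "c j \<noteq> c 1" using c_eq[of j 1] that k3 by auto
      then have "edge_gt (c j) (c 1)" using g1 that c1_eq by auto
      moreover have "c j \<in> T2" using that unfolding T2_def by auto
      ultimately show ?thesis using H a by blast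
    qed
    let ?F = "T' - {{v 1, v 2}}"
    have cF: "c j \<in> ?F" if "2 \<le> j" "j \<le> k" for j
      using cT[OF that] c_eq[of j 1] that k3 c1_eq by auto
    have "(v 2, v k) \<in> (edge_conn ?F)\<^sup>*" using k3 cF by (intro path_c) auto
    moreover have "(v k, v 1) \<in> (edge_conn ?F)\<^sup>*" using edge_c[OF cF[of k]] k3 by (simp add: nx_k)
    ultimately have "(v 2, v 1) \<in> (edge_conn ?F)\<^sup>*" by (rule rtrancl_trans)
    then have "(v 1, v 2) \<in> (edge_conn ?F)\<^sup>*" by (rule rtr_sym)
    then have "connects V ?F" by (rule reroute[OF conT])
    moreover have "c 1 \<in> T'" using x a by simp
    ultimately show False using minT c1_eq by auto
  next
    case b
    have "edge_gt (r 2) (r 1)" unfolding r_def edge_gt_def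
      using gt0[of 1] gt0[of 2] g2 k3 by auto
    moreover have "r 2 \<in> T2" unfolding T2_def by simp
    ultimately have r2: "r 2 \<in> T'" using H b by blast
    have c2eq: "c 2 = {v 2, v 3}" using k3 by (simp add: c_def nx_lt numeral_3_eq_3)
    have "edge_gt (c 2) (r 1)" unfolding c2eq r_def edge_gt_def
      using gt0[of 1] gt0[of 2] gt0[of 3] g2 k3 by (auto simp: min_def)
    moreover have "c 2 \<in> T2" unfolding T2_def using k3 by simp
    ultimately have c2: "c 2 \<in> T'" using H b by blast
    have "edge_gt (c k) (r 1)" unfolding ck_eq r_def
      using gt0[of 1] gt0[of k] k3 by (intro edge_gt_pair) auto
    moreover have "c k \<in> T2" unfolding T2_def using k3 by simp
    ultimately have ck: "c k \<in> T'" using H b by blast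
    have r1: "r 1 \<in> T'" using x b by simp
    have "\<forall>e\<in>E - T'. cl {1,2} e"
    proof
      fix e assume e: "e \<in> E - T'"
      show "cl {1,2} e"
      proof (cases "e \<in> R")
        case True
        then obtain j where j: "1 \<le> j" "j \<le> k" "e = r j" by auto
        then have "j \<noteq> 1" "j \<noteq> 2" using e r1 r2 by auto
        then have "cl {1,2} (r j)" using j by (intro cl_r) auto
        then show ?thesis using j by simp
      next
        case False
        then obtain j where j: "1 \<le> j" "j \<le> k" "e = c j" using e by auto
        then have "j \<noteq> 2" "j \<noteq> k" using e c2 ck by auto
        then have "cl {1,2} (c j)" using j k3 by (intro cl_c) (auto simp: nx_def)
        then show ?thesis using j by simp
      qed
    qed
    then have "\<not> connects V (E - T')" using k3 by (intro not_conn[of "{1,2}" 1 0]) auto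
    then show False using conC by simp
  next
    case c
    have ri: "r i \<in> T'" using x c by simp
    have eq1: "c (i - 1) = {v (i - 1), v i}" using c by (simp add: c_def nx_lt)
    have "edge_gt (c (i - 1)) (r i)" unfolding eq1 r_def
      using gt0[of i] gt0[of "i - 1"] c by (intro edge_gt_pair) auto
    moreover have "c (i - 1) \<in> T2"
    proof -
      have "i - 1 \<in> {2..k}" using c by auto
      then show ?thesis unfolding T2_def by blast
    qed
    ultimately have c1T: "c (i - 1) \<in> T'" using H c by blast
    have eq2: "c i = {v (nx i), v i}" by (simp add: c_def insert_commute)
    have "edge_gt (c i) (r i)" unfolding eq2 r_def
      using gt0[of i] gt0[of "nx i"] nx_range[of i] c by (intro edge_gt_pair) auto
    moreover have "c i \<in> T2" unfolding T2_def using c by auto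
    ultimately have c2T: "c i \<in> T'" using H c by blast
    have "\<forall>e\<in>E - T'. cl {i} e"
    proof
      fix e assume e: "e \<in> E - T'"
      show "cl {i} e"
      proof (cases "e \<in> R")
        case True
        then obtain j where j: "1 \<le> j" "j \<le> k" "e = r j" by auto
        then have "j \<noteq> i" using e ri by auto
        then have "cl {i} (r j)" using j c by (intro cl_r) auto
        then show ?thesis using j by simp
      next
        case False
        then obtain j where j: "1 \<le> j" "j \<le> k" "e = c j" using e by auto
        then have "j \<noteq> i" "j \<noteq> i - 1" using e c1T c2T by auto
        then have "cl {i} (c j)" using j c by (intro cl_c) (auto simp: nx_def)
        then show ?thesis using j by simp
      qed
    qed
    then have "\<not> connects V (E - T')" using c by (intro not_conn[of "{i}" i 0]) auto
    then show False using conC by simp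
  qed
qed

lemma part2: "(THE T. coupled_tree V E T \<and> (\<forall>T'. coupled_tree V E T' \<and> T' \<noteq> T \<longrightarrow> set_gt T T')) = T2"
proof (rule the_leading)
  show "coupled_tree V E T2" unfolding coupled_tree_def using T2_sub T2_tree ET2_tree ET2_eq by simp
  show "\<forall>T'. coupled_tree V E T' \<and> T' \<noteq> T2 \<longrightarrow> set_gt T2 T'" using T2_max by blast
qed

end

theorem proposition4p2:
  fixes n k :: nat and v :: "nat \<Rightarrow> nat"
  assumes "k \<ge> 3"
    and "inj_on v {0..k}"
    and "v ` {0..k} \<subseteq> {1..n}"
  shows "(v 0 = Min (wheel_vertices v k) \<and> v 1 = Max (v ` {1..k}) \<and> v 2 > v k \<longrightarrow>
           leading_tree v k = (radii v k - {{v 0, v 1}}) \<union> {{v k, v 1}})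
       \<and> (v 0 = Max (wheel_vertices v k) \<and>
           (\<forall>c\<in>chords v k. c \<noteq> {v 1, v 2} \<longrightarrow> edge_gt c {v 1, v 2}) \<and> v 1 > v 2 \<longrightarrow>
           leading_tree v k = (chords v k - {{v 1, v 2}}) \<union> {{v 0, v 2}})"
proof -
  interpret wheel k v using assms(1,2) by unfold_locales
  have wv: "wheel_vertices v k = V" by (simp add: wheel_vertices_def)
  have wr: "radii v k = R" unfolding radii_def r_def by auto
  have wc: "chords v k = C" unfolding chords_def c_def nx_def by force
  have we: "wheel_edges v k = E" unfolding wheel_edges_def wr wc ..
  have lt: "leading_tree v k = (THE T. coupled_tree V E T \<and> (\<forall>T'. coupled_tree V E T' \<and> T' \<noteq> T \<longrightarrow> set_gt T T'))"
    unfolding leading_tree_def wv we ..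
  show ?thesis
  proof (intro conjI impI)
    assume h: "v 0 = Min (wheel_vertices v k) \<and> v 1 = Max (v ` {1..k}) \<and> v 2 > v k"
    interpret wheel1 k v using h wv by unfold_locales auto
    have "R - {r 1} = r ` {2..k}"
    proof
      show "R - {r 1} \<subseteq> r ` {2..k}"
      proof
        fix e assume "e \<in> R - {r 1}"
        then have e1: "e \<in> r ` {1..k}" "e \<noteq> r 1" by blast+
        then obtain i where "i \<in> {1..k}" "e = r i" by blast
        then have i: "1 \<le> i" "i \<le> k" "e = r i" "r i \<noteq> r 1" using e1 by auto
        then have "i \<noteq> 1" by auto
        then show "e \<in> r ` {2..k}" using i by auto
      qed
      show "r ` {2..k} \<subseteq> R - {r 1}"
      proof
        fix e assume "e \<in> r ` {2..k}"
        then obtain i where i: "2 \<le> i" "i \<le> k" "e = r i" by auto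
        then have "r i \<noteq> r 1" using r_eq[of i 1] by auto
        then show "e \<in> R - {r 1}" using i by auto
      qed
    qed
    moreover have "{v 0, v 1} = r 1" "{v k, v 1} = c k" by (simp_all add: r_def ck_eq)
    ultimately have "(radii v k - {{v 0, v 1}}) \<union> {{v k, v 1}} = T1" unfolding wr T1_def by simp
    then show "leading_tree v k = (radii v k - {{v 0, v 1}}) \<union> {{v k, v 1}}" using lt part1 by simp
  next
    assume h: "v 0 = Max (wheel_vertices v k) \<and>
           (\<forall>c\<in>chords v k. c \<noteq> {v 1, v 2} \<longrightarrow> edge_gt c {v 1, v 2}) \<and> v 1 > v 2"
    interpret wheel2 k v using h wv wc by unfold_locales auto
    have "C - {c 1} = c ` {2..k}"
    proof
      show "C - {c 1} \<subseteq> c ` {2..k}"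
      proof
        fix e assume "e \<in> C - {c 1}"
        then have e1: "e \<in> c ` {1..k}" "e \<noteq> c 1" by blast+
        then obtain i where "i \<in> {1..k}" "e = c i" by blast
        then have i: "1 \<le> i" "i \<le> k" "e = c i" "c i \<noteq> c 1" using e1 by auto
        then have "i \<noteq> 1" by auto
        then show "e \<in> c ` {2..k}" using i by auto
      qed
      show "c ` {2..k} \<subseteq> C - {c 1}"
      proof
        fix e assume "e \<in> c ` {2..k}"
        then obtain i where i: "2 \<le> i" "i \<le> k" "e = c i" by auto
        then have "c i \<noteq> c 1" using c_eq[of i 1] by auto
        then show "e \<in> C - {c 1}" using i by auto
      qed
    qed
    moreover have "{v 1, v 2} = c 1" by (rule c1_eq[symmetric])
    moreover have "{v 0, v 2} = r 2" by (simp add: r_def)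
    ultimately have "(chords v k - {{v 1, v 2}}) \<union> {{v 0, v 2}} = T2" unfolding wc T2_def by auto
    then show "leading_tree v k = (chords v k - {{v 1, v 2}}) \<union> {{v 0, v 2}}" using lt part2 by simp
  qed
qed

end
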